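(* Let $q$ be a prime power, let $\chi'$ be the canonical additive character of $\mathbb{F}_{q^2}$, and for integers $e_1,e_2$ and $a,b\in\mathbb{F}_{q^2}$ define $$T_{(e_1,e_2)}(a,b):=\sum_{y\in\mathbb{F}_q^*}\sum_{x\in\mathbb{F}_{q^2}^*}\chi'\!\left(ya x^{(q+1)e_1}+yb x^{e_2}\right).$$ If $\gcd(q-1,2e_1-e_2)=1$ and $\gcd(q+1,e_2)=1$, then $$T_{(e_1,e_2)}(a,b)=\begin{cases}(q-1)(q^2-1) & \text{if } a=0 \text{ and } b=0,\\ -(q^2-1) & \text{if } a^q+a\neq 0 \text{ and } b=0,\\ -(q-1) & \text{if } a^q+a=0 \text{ and } b\neq 0,\\ 1 & \text{if } a^q+a\neq 0 \text{ and } b\neq 0.\end{cases}$$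
   Context: For a finite field $F$ of characteristic $p$, the canonical additive character is $\chi(c)=e^{2\pi i\,\mathrm{Tr}_{F/\mathbb{F}_p}(c)/p}$. *)

theory Defs
  imports "HOL-Analysis.Analysis"
begin

definition ff_degree :: "'a::{field,finite} itself \<Rightarrow> nat" where
  "ff_degree _ = (THE n. CHAR('a) ^ n = CARD('a))"

definition abs_trace :: "'a::{field,finite} \<Rightarrow> 'a" where
  "abs_trace c = (\<Sum>i<ff_degree TYPE('a). c ^ (CHAR('a) ^ i))"

text \<open>Canonical additive character chi(c) = exp(2 pi i Tr(c)/p), where the trace
  (lying in the prime field) is identified with the integer k in {0..p-1}
  with of_nat k = Tr(c).\<close>
definition can_add_char :: "'a::{field,finite} \<Rightarrow> complex" where
  "can_add_char c =
     (let k = (THE k. k < CHAR('a) \<and> of_nat k = abs_trace c)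
      in exp (2 * pi * \<i> * of_nat k / of_nat CHAR('a)))"

text \<open>T_{(e1,e2)}(a,b) over F_{q^2} (the type 'a, with CARD('a) = q^2);
  F_q^* is the set of nonzero y with y^q = y.\<close>
definition T_sum :: "nat \<Rightarrow> int \<Rightarrow> int \<Rightarrow> 'a::{field,finite} \<Rightarrow> 'a \<Rightarrow> complex" where
  "T_sum q e1 e2 a b =
     (\<Sum>y\<in>{y::'a. y ^ q = y \<and> y \<noteq> 0}. \<Sum>x\<in>{x::'a. x \<noteq> 0}.
        can_add_char (y * a * x powi ((int q + 1) * e1) + y * b * x powi e2))"

end

theory Submission imports Defs "HOL-Computational_Algebra.Computational_Algebra" "HOL-Number_Theory.Cong"
begin

lemma of_nat_card_zero: "of_nat CARD('a::{ring_1,finite}) = (0::'a)"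
proof -
  have "(\<Sum>x\<in>(UNIV::'a set). x) = (\<Sum>x\<in>UNIV. x + 1)"
    by (rule sum.reindex_bij_witness[of _ "\<lambda>y. y + 1" "\<lambda>y. y - 1"]) auto
  also have "\<dots> = (\<Sum>x\<in>UNIV. x) + of_nat CARD('a)"
    by (simp add: sum.distrib)
  finally show ?thesis by simp
qed

lemma power_card_same: "(x::'a::{field,finite}) ^ CARD('a) = x"
proof (cases "x = 0")
  case False
  have "x * (\<Prod>y\<in>UNIV-{0}. x * y) = x * x ^ (card (UNIV :: 'a set) - 1) * \<Prod>(UNIV-{0})"
    by (simp add: prod.distrib mult_ac)
  also have "x * x ^ (card (UNIV :: 'a set) - 1) = x ^ Suc (card (UNIV :: 'a set) - 1)"
    by (subst power_Suc) auto
  also have "Suc (card (UNIV :: 'a set) - 1) = card (UNIV :: 'a set)"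
    using finite_UNIV_card_ge_0[where ?'a = 'a] by simp
  also have "(\<Prod>y\<in>UNIV-{0}. x * y) = (\<Prod>y\<in>UNIV-{0}. y)"
    by (rule prod.reindex_bij_witness[of _ "\<lambda>y. y / x" "\<lambda>y. x * y"]) (use False in auto)
  finally show ?thesis
    by simp
qed (use finite_UNIV_card_ge_0[where ?'a = 'a] in auto)

lemma char_prime: "prime CHAR('a::{field,finite})"
  by (rule prime_CHAR_semidom) (rule finite_imp_CHAR_pos, simp)

lemma roots_bound:
  fixes c :: "'a::field"
  assumes "n \<ge> 2"
  shows "card {z. z ^ n + c * z = 0} \<le> n"
proof -
  define P where "P = monom (1::'a) n + [:0, c:]"
  have "coeff [:0,c:] n = 0" using assms by (auto simp: coeff_pCons split: nat.split)
  hence cP: "coeff P n = 1" using assms by (simp add: P_def)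
  hence nz: "P \<noteq> 0" by auto
  have dP: "degree P \<le> n"
    unfolding P_def using assms by (intro degree_add_le) (auto simp: degree_monom_le)
  have "{z. z ^ n + c * z = 0} = {z. poly P z = 0}"
    by (simp add: P_def poly_monom mult.commute)
  also have "card \<dots> \<le> degree P" by (rule card_poly_roots_bound[OF nz])
  finally show ?thesis using dP by simp
qed

locale ffset =
  fixes p m :: nat and ty :: "'a::{field,finite} itself"
  assumes pp: "prime p" and mpos: "m > 0" and charp: "CHAR('a) = p"
    and cardF: "CARD('a) = p ^ (2*m)"
begin

abbreviation "q \<equiv> p ^ m"

lemma p2: "p \<ge> 2" using pp prime_ge_2_nat by blast

lemma q2: "q \<ge> 2"
proof -
  have "p ^ 1 \<le> p ^ m" using p2 mpos by (intro power_increasing) auto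
  thus ?thesis using p2 by simp
qed

lemma deg: "ff_degree TYPE('a) = 2*m"
  unfolding ff_degree_def charp cardF
proof (rule the_equality)
  fix n assume "p ^ n = p ^ (2*m)" thus "n = 2*m" using p2 power_inject_exp by (metis Suc_1 Suc_le_lessD)
qed simp

lemma frob: "((x::'a) + y) ^ (p ^ i) = x ^ (p ^ i) + y ^ (p ^ i)"
  by (rule freshmans_dream') (auto simp: charp pp)

lemma frob_sum: "(sum (f::'b \<Rightarrow> 'a) A) ^ (p ^ i) = sum (\<lambda>j. f j ^ (p ^ i)) A"
  by (rule freshmans_dream_sum') (auto simp: charp pp)

lemma frob_minus: "(- (x::'a)) ^ (p ^ i) = - (x ^ (p ^ i))"
proof -
  have "(- x + x) ^ (p ^ i) = (- x) ^ (p ^ i) + x ^ (p ^ i)" by (rule frob)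
  moreover have "(0::'a) ^ (p ^ i) = 0" using p2 by simp
  ultimately show ?thesis by (simp add: eq_neg_iff_add_eq_0)
qed

lemma tr_def': "abs_trace (c::'a) = (\<Sum>i<2*m. c ^ (p ^ i))"
  unfolding abs_trace_def deg charp ..

lemma tr_add: "abs_trace ((x::'a) + y) = abs_trace x + abs_trace y"
  unfolding tr_def' frob by (simp add: sum.distrib)

lemma tr_zero: "abs_trace (0::'a) = 0"
  unfolding tr_def' using p2 by (simp add: power_0_left)

lemma pow_card: "(c::'a) ^ (p ^ (2*m)) = c"
  using power_card_same[where x=c] cardF by simp

lemma tr_pow: "abs_trace (c::'a) ^ p = abs_trace c"
proof -
  have "abs_trace c ^ p = abs_trace c ^ (p ^ 1)" by simp
  also have "\<dots> = (\<Sum>i<2*m. c ^ (p ^ Suc i))"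
    unfolding tr_def' frob_sum by (simp add: power_mult[symmetric] mult.commute)
  also have "\<dots> = (\<Sum>i<Suc (2*m). c ^ (p ^ i)) - c ^ (p ^ 0)"
    by (subst sum.lessThan_Suc_shift) simp
  also have "\<dots> = abs_trace c"
    unfolding tr_def' using pow_card[of c] by (simp add: sum.lessThan_Suc)
  finally show ?thesis .
qed

lemma of_nat_pow: "(of_nat k :: 'a) ^ p = of_nat k"
proof (induction k)
  case 0 thus ?case using p2 by simp
next
  case (Suc k)
  have "(of_nat k + 1 :: 'a) ^ (p ^ 1) = of_nat k ^ (p ^ 1) + 1 ^ (p ^ 1)" by (rule frob)
  thus ?case using Suc by (simp add: add.commute)
qed

lemma prime_field: assumes "(z::'a) ^ p = z" shows "\<exists>k<p. z = of_nat k"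
proof -
  let ?S = "(of_nat ` {..<p}) :: 'a set"
  let ?R = "{z::'a. z ^ p + (-1) * z = 0}"
  have inj: "inj_on (of_nat :: nat \<Rightarrow> 'a) {..<p}"
  proof
    fix x y assume "x \<in> {..<p}" "y \<in> {..<p}" "(of_nat x :: 'a) = of_nat y"
    thus "x = y" using of_nat_eq_iff_cong_CHAR[where 'a='a, of x y] charp
      by (simp add: cong_def)
  qed
  have cS: "card ?S = p" using card_image[OF inj] by simp
  have sub: "?S \<subseteq> ?R" using of_nat_pow by auto
  have "card ?R \<le> p" by (rule roots_bound[OF p2])
  moreover have "card ?S \<le> card ?R" using sub by (intro card_mono) auto
  ultimately have "card ?S = card ?R" using cS by simp
  hence "?S = ?R" using sub by (intro card_subset_eq) auto
  moreover have "z \<in> ?R" using assms by simp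
  ultimately show ?thesis by auto
qed

lemma tr_nat: "\<exists>k. of_nat k = abs_trace (c::'a)"
  using prime_field[OF tr_pow[of c]] by metis

lemma char_val:
  assumes "of_nat k = abs_trace (u::'a)"
  shows "can_add_char u = exp (2 * pi * \<i> * of_nat k / of_nat p)"
proof -
  have pp0: "p > 0" using p2 by simp
  define k0 where "k0 = k mod p"
  have k0: "k0 < p" "of_nat k0 = abs_trace u"
    using pp0 assms of_nat_eq_iff_cong_CHAR[where 'a='a, of "k mod p" k] charp
    by (auto simp: k0_def cong_def)
  have the: "(THE k. k < p \<and> of_nat k = abs_trace u) = k0"
  proof (rule the_equality)
    fix k' assume "k' < p \<and> of_nat k' = abs_trace u"
    thus "k' = k0" using k0 of_nat_eq_iff_cong_CHAR[where 'a='a, of k' k0] charp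
      by (simp add: cong_def)
  qed (use k0 in auto)
  have kk: "k = k0 + p * (k div p)" by (simp add: k0_def)
  have "exp (2 * pi * \<i> * of_nat k / of_nat p) =
        exp (2 * pi * \<i> * of_nat k0 / of_nat p + \<i> * (of_nat (k div p) * (of_real pi * 2)))"
    using pp0 by (subst kk) (simp add: field_simps)
  also have "\<dots> = exp (2 * pi * \<i> * of_nat k0 / of_nat p)"
    by (simp add: exp_add)
  finally show ?thesis unfolding can_add_char_def Let_def charp the by simp
qed

lemma psi_add: "can_add_char ((u::'a) + v) = can_add_char u * can_add_char v"
proof -
  obtain k l where k: "of_nat k = abs_trace u" and l: "of_nat l = abs_trace v"
    using tr_nat by metis
  have "of_nat (k + l) = abs_trace (u + v)" using k l tr_add by simp
  have e: "2 * pi * \<i> * of_nat (k + l) / of_nat p =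
     2 * pi * \<i> * of_nat k / of_nat p + 2 * pi * \<i> * of_nat l / of_nat p"
    by (simp add: add_divide_distrib distrib_left)
  show ?thesis unfolding char_val[OF \<open>of_nat (k + l) = abs_trace (u + v)\<close>] char_val[OF k] char_val[OF l] e
    by (rule exp_add)
qed

lemma psi_tr0: assumes "abs_trace (u::'a) = 0" shows "can_add_char u = 1"
  using char_val[of 0 u] assms by simp

lemma psi_zero: "can_add_char (0::'a) = 1"
  using psi_tr0 tr_zero by simp

lemma psi_nontriv: assumes "abs_trace (u::'a) \<noteq> 0" shows "can_add_char u \<noteq> 1"
proof -
  obtain k where k: "k < p" "of_nat k = abs_trace u"
    using prime_field[OF tr_pow[of u]] by metis
  have k0: "k > 0" using k assms by (cases k) auto
  have "exp (2 * pi * \<i> * of_nat k / of_nat p) \<noteq> 1"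
  proof
    assume "exp (2 * pi * \<i> * of_nat k / of_nat p) = 1"
    then obtain n :: int where "Im (2 * pi * \<i> * of_nat k / of_nat p) = of_int (2 * n) * pi"
      using exp_eq_1 by blast
    hence "2 * pi * real k / real p = 2 * real_of_int n * pi" by simp
    hence "real k = real p * real_of_int n" using p2 by (simp add: field_simps)
    hence "int k = int p * n" by (metis of_int_eq_iff of_int_mult of_int_of_nat_eq)
    hence pos: "int p * n > 0" using k0 by linarith
    hence "n > 0" using p2 by (simp add: zero_less_mult_iff)
    hence ge: "int p * n \<ge> int p * 1" by (intro mult_left_mono) auto
    from ge \<open>int k = int p * n\<close> k(1) show False by linarith
  qed
  thus ?thesis using char_val[OF k(2)] by simp
qed


lemma frobq: "((x::'a) + y) ^ q = x ^ q + y ^ q" by (rule frob)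
lemma frobq_minus: "(- (x::'a)) ^ q = - (x ^ q)" by (rule frob_minus)

lemma pow_qq: "(x::'a) ^ (q * q) = x"
proof -
  have "q * q = p ^ (2*m)" by (simp add: power_add[symmetric] mult_2)
  thus ?thesis using pow_card by simp
qed

lemma sum_double: fixes f :: "nat \<Rightarrow> 'b::comm_monoid_add" and k n :: nat shows "(\<Sum>i<k+n. f i) = (\<Sum>i<k. f i) + (\<Sum>i<n. f (k+i))"
  by (induction n) (auto simp: add_ac)

lemma tr_split: "abs_trace (w::'a) = (\<Sum>i<m. (w + w ^ q) ^ (p ^ i))"
proof -
  have "abs_trace w = (\<Sum>i<m+m. w ^ (p ^ i))" unfolding tr_def' by (simp add: mult_2)
  also have "\<dots> = (\<Sum>i<m. w ^ (p ^ i)) + (\<Sum>i<m. w ^ (p ^ (m+i)))" by (rule sum_double)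
  also have "(\<Sum>i<m. w ^ (p ^ (m+i))) = (\<Sum>i<m. (w ^ q) ^ (p ^ i))"
    by (simp add: power_add power_mult)
  also have "(\<Sum>i<m. w ^ (p ^ i)) + (\<Sum>i<m. (w ^ q) ^ (p ^ i)) = (\<Sum>i<m. (w + w ^ q) ^ (p ^ i))"
    by (simp add: frob sum.distrib)
  finally show ?thesis .
qed

definition KK :: "'a set" where "KK = {y. y ^ q = y}"

lemma card_K: "card KK = q"
proof (rule antisym)
  have "card {z::'a. z ^ q + (-1) * z = 0} \<le> q" by (rule roots_bound[OF q2])
  moreover have "KK = {z::'a. z ^ q + (-1) * z = 0}" by (auto simp: KK_def)
  ultimately show "card KK \<le> q" by (simp only:)
next
  define g where "g = (\<lambda>w::'a. w + w ^ q)"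
  have gsub: "g x - g y = g (x - y)" for x y
  proof -
    have "(x - y) ^ q = x ^ q - y ^ q" using frobq[of x "-y"] frobq_minus[of y] by simp
    thus ?thesis by (simp add: g_def)
  qed
  have img: "range g \<subseteq> KK"
  proof
    fix t assume "t \<in> range g"
    then obtain w where t: "t = g w" by auto
    have "t ^ q = w ^ q + w ^ (q * q)" unfolding t g_def frobq by (simp add: power_mult)
    thus "t \<in> KK" using pow_qq[of w] by (simp add: KK_def t g_def)
  qed
  have fib: "card {w. g w = t} \<le> q" if "t \<in> range g" for t
  proof -
    obtain w0 where t: "t = g w0" using \<open>t \<in> range g\<close> by auto
    have "{w. g w = t} \<subseteq> (\<lambda>z. z + w0) ` {z. z ^ q + 1 * z = 0}"
    proof
      fix w assume "w \<in> {w. g w = t}"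
      hence "g (w - w0) = 0" using gsub[of w w0] t by simp
      hence "(w - w0) ^ q + 1 * (w - w0) = 0" by (simp add: g_def add.commute)
      thus "w \<in> (\<lambda>z. z + w0) ` {z. z ^ q + 1 * z = 0}"
        by (intro image_eqI[of _ _ "w - w0"]) auto
    qed
    hence "card {w. g w = t} \<le> card ((\<lambda>z. z + w0) ` {z. z ^ q + 1 * z = 0})"
      by (intro card_mono) auto
    also have "\<dots> \<le> card {z::'a. z ^ q + 1 * z = 0}" by (rule card_image_le) auto
    also have "\<dots> \<le> q" by (rule roots_bound[OF q2])
    finally show ?thesis .
  qed
  have "(UNIV::'a set) = (\<Union>t\<in>range g. {w. g w = t})" by auto
  hence "card (UNIV::'a set) \<le> (\<Sum>t\<in>range g. card {w. g w = t})"
    by (metis card_UN_le finite)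
  also have "\<dots> \<le> (\<Sum>t\<in>range g. q)" by (intro sum_mono fib)
  also have "\<dots> = card (range g) * q" by simp
  finally have "q * q \<le> card (range g) * q"
    using cardF by (simp add: power_add[symmetric] mult_2)
  hence "q \<le> card (range g)" using q2 p2 by simp
  also have "\<dots> \<le> card KK" using img by (intro card_mono) auto
  finally show "q \<le> card KK" .
qed

lemma rootbound_tr:
  assumes "(c::'a) \<noteq> 0" "n > 0"
  shows "card {u::'a. (\<Sum>i<n. (u * c) ^ (p ^ i)) = 0} \<le> p ^ (n - 1)"
proof -
  define P where "P = (\<Sum>i<n. monom (c ^ (p ^ i)) (p ^ i))"
  have pinj: "p ^ i = p ^ j \<longleftrightarrow> i = j" for i j
    using p2 power_inject_exp[of p i j] by simp
  have cf: "coeff P j = (\<Sum>i<n. if p ^ i = j then c ^ (p ^ i) else 0)" for j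
    by (simp add: P_def coeff_sum coeff_monom)
  have "coeff P (p ^ (n-1)) = c ^ (p ^ (n - 1))"
    unfolding cf pinj using assms(2) by (simp add: sum.delta)
  hence nz: "P \<noteq> 0" using assms(1) by auto
  have dP: "degree P \<le> p ^ (n - 1)"
  proof (rule degree_le, intro allI impI)
    fix j assume j: "p ^ (n - 1) < j"
    have "p ^ i \<noteq> j" if "i < n" for i
    proof -
      have "p ^ i \<le> p ^ (n - 1)" using that p2 by (intro power_increasing) auto
      thus ?thesis using j by simp
    qed
    thus "coeff P j = 0" unfolding cf by (intro sum.neutral) auto
  qed
  have "{u::'a. (\<Sum>i<n. (u * c) ^ (p ^ i)) = 0} = {u. poly P u = 0}"
    by (simp add: P_def poly_sum poly_monom power_mult_distrib mult.commute)
  also have "card \<dots> \<le> degree P" by (rule card_poly_roots_bound[OF nz])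
  finally show ?thesis using dP by simp
qed

lemma tr_nonzero_F: "\<exists>w::'a. abs_trace w \<noteq> 0"
proof (rule ccontr)
  assume "\<not> ?thesis"
  hence "(UNIV::'a set) = {u::'a. (\<Sum>i<2*m. (u * 1) ^ (p ^ i)) = 0}" by (auto simp: tr_def')
  hence "card (UNIV::'a set) \<le> p ^ (2*m - 1)"
    using rootbound_tr[of 1 "2*m"] mpos by simp
  moreover have "p ^ (2*m - 1) < p ^ (2*m)" using p2 mpos by (intro power_strict_increasing) auto
  ultimately show False using cardF by simp
qed

lemma tr_K: assumes "u \<in> KK" shows "abs_trace (u * a) = (\<Sum>i<m. (u * (a + a ^ q)) ^ (p ^ i))"
proof -
  have "u ^ q = u" using assms by (simp add: KK_def)
  hence "u * a + (u * a) ^ q = u * (a + a ^ q)" by (simp add: power_mult_distrib distrib_left)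
  thus ?thesis by (simp add: tr_split)
qed

lemma tr_nonzero_K: assumes "a + a ^ q \<noteq> (0::'a)" shows "\<exists>u\<in>KK. abs_trace (u * a) \<noteq> 0"
proof (rule ccontr)
  assume "\<not> ?thesis"
  hence "KK \<subseteq> {u::'a. (\<Sum>i<m. (u * (a + a ^ q)) ^ (p ^ i)) = 0}" using tr_K by auto
  hence "card KK \<le> card {u::'a. (\<Sum>i<m. (u * (a + a ^ q)) ^ (p ^ i)) = 0}" by (intro card_mono) auto
  also have "\<dots> \<le> p ^ (m - 1)" using rootbound_tr[OF assms mpos] .
  also have "\<dots> < q" using p2 mpos by (intro power_strict_increasing) auto
  finally show False using card_K by simp
qed

lemma orth:
  assumes "finite S" "\<And>s. s \<in> S \<Longrightarrow> s + u0 \<in> S" "\<And>s. s \<in> S \<Longrightarrow> s - u0 \<in> S"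
    and "can_add_char (u0 * c) \<noteq> 1"
  shows "(\<Sum>s\<in>S. can_add_char ((s::'a) * c)) = 0"
proof -
  have "(\<Sum>s\<in>S. can_add_char ((s + u0) * c)) = (\<Sum>s\<in>S. can_add_char (s * c))"
    by (rule sum.reindex_bij_witness[of _ "\<lambda>s. s - u0" "\<lambda>s. s + u0"]) (use assms in auto)
  moreover have "(\<Sum>s\<in>S. can_add_char ((s + u0) * c)) = can_add_char (u0 * c) * (\<Sum>s\<in>S. can_add_char (s * c))"
  proof -
    have "can_add_char ((s+u0)*c) = can_add_char (u0*c) * can_add_char (s*c)" for s
      by (metis distrib_right psi_add mult.commute)
    thus ?thesis by (simp add: sum_distrib_left)
  qed
  ultimately have "(1 - can_add_char (u0 * c)) * (\<Sum>s\<in>S. can_add_char (s * c)) = 0"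
    by (simp add: algebra_simps)
  thus ?thesis using assms(4) by simp
qed

lemma SF: "(\<Sum>v\<in>{x::'a. x \<noteq> 0}. can_add_char (v * b)) = (if b = 0 then of_nat (CARD('a) - 1) else -1)"
proof (cases "b = 0")
  case True
  have "{x::'a. x \<noteq> 0} = UNIV - {0}" by auto
  hence "card {x::'a. x \<noteq> 0} = CARD('a) - 1"
    using card_Diff_singleton[of "0::'a" UNIV] by simp
  thus ?thesis using True psi_zero by simp
next
  case False
  obtain w where w: "abs_trace (w::'a) \<noteq> 0" using tr_nonzero_F by blast
  have "can_add_char ((w / b) * b) \<noteq> 1" using False psi_nontriv[OF w] by simp
  hence z: "(\<Sum>s\<in>UNIV. can_add_char ((s::'a) * b)) = 0" by (intro orth[of _ "w/b"]) auto
  have "(\<Sum>s\<in>UNIV. can_add_char ((s::'a) * b)) = can_add_char (0 * b) + (\<Sum>s\<in>UNIV - {0}. can_add_char ((s::'a) * b))"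
    by (rule sum.remove) auto
  moreover have "UNIV - {0::'a} = {x. x \<noteq> 0}" by auto
  ultimately show ?thesis using z False psi_zero by (simp add: eq_neg_iff_add_eq_0 add.commute)
qed

lemma SK: "(\<Sum>u\<in>{y::'a. y ^ q = y \<and> y \<noteq> 0}. can_add_char (u * a)) = (if a ^ q + a = 0 then of_nat (q - 1) else -1)"
proof -
  have Ks: "{y::'a. y ^ q = y \<and> y \<noteq> 0} = KK - {0}" by (auto simp: KK_def)
  have zK: "(0::'a) \<in> KK" using q2 p2 by (simp add: KK_def power_0_left)
  show ?thesis
  proof (cases "a ^ q + a = 0")
    case True
    have "can_add_char (u * a) = 1" if "u \<in> KK - {0}" for u
      using tr_K[of u] that True p2 by (intro psi_tr0) (simp add: add.commute power_0_left)
    hence "(\<Sum>u\<in>KK - {0}. can_add_char (u * a)) = (\<Sum>u\<in>KK - {0}. 1)" by (intro sum.cong) auto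
    also have "\<dots> = of_nat (q - 1)" using card_K zK by (simp add: card_Diff_singleton)
    finally show ?thesis unfolding Ks using True by simp
  next
    case False
    hence "a + a ^ q \<noteq> 0" by (simp add: add.commute)
    then obtain u0 where u0: "u0 \<in> KK" "abs_trace (u0 * a) \<noteq> 0" using tr_nonzero_K by blast
    have cl1: "s + u0 \<in> KK" if "s \<in> KK" for s
      using that u0 by (simp add: KK_def frobq)
    have cl2: "s - u0 \<in> KK" if "s \<in> KK" for s
      using that u0 frobq[of s "-u0"] frobq_minus[of u0] by (simp add: KK_def)
    have z: "(\<Sum>s\<in>KK. can_add_char (s * a)) = 0"
      by (rule orth[OF _ cl1 cl2 psi_nontriv[OF u0(2)]]) auto
    have "(\<Sum>s\<in>KK. can_add_char (s * a)) = can_add_char (0 * a) + (\<Sum>s\<in>KK - {0}. can_add_char (s * a))"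
      by (rule sum.remove) (use zK in auto)
    thus ?thesis unfolding Ks using z False psi_zero by (simp add: eq_neg_iff_add_eq_0 add.commute)
  qed
qed


lemma unit_root:
  assumes "(z::'a) \<noteq> 0" "gcd ii jj = 1" "z powi ii = 1" "z powi jj = 1"
  shows "z = 1"
proof -
  obtain uu vv where "uu * ii + vv * jj = gcd ii jj" using bezout_int by blast
  hence e: "ii * uu + jj * vv = 1" using assms(2) by (simp add: mult.commute)
  have "z = z powi (ii * uu + jj * vv)" using e by simp
  also have "\<dots> = z powi (ii * uu) * z powi (jj * vv)" using assms(1) by (simp add: power_int_add)
  also have "\<dots> = 1" by (simp add: power_int_mult assms)
  finally show ?thesis .
qed

lemma pow_sub1: assumes "(t::'a) ^ n = t" "t \<noteq> 0" "n > 0" shows "t ^ (n - 1) = 1"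
proof -
  have "t * t ^ (n - 1) = t * 1" using assms by (metis Suc_diff_1 mult.right_neutral power_Suc)
  thus ?thesis using assms(2) by simp
qed

lemma qq1: "(q - 1) * (q + 1) = q * q - 1"
  using q2 p2 by (cases q) (simp_all add: algebra_simps)

lemma T_eval:
  assumes g1: "gcd (int q - 1) (2 * e1 - e2) = 1" and g2: "gcd (int q + 1) e2 = 1"
  shows "T_sum q e1 e2 a b = (\<Sum>u\<in>{y::'a. y ^ q = y \<and> y \<noteq> 0}. can_add_char (u * a)) *
                             (\<Sum>v\<in>{x::'a. x \<noteq> 0}. can_add_char (v * b))"
proof -
  define Ks where "Ks = {y::'a. y ^ q = y \<and> y \<noteq> 0}"
  define Fs where "Fs = {x::'a. x \<noteq> 0}"
  define E where "E = (int q + 1) * e1"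
  define A where "A = Ks \<times> Fs"
  define Phi where "Phi = (\<lambda>(y::'a,x::'a). (y * x powi E, y * x powi e2))"
  have q0: "q > 0" using q2 p2 by simp
  have img: "Phi ` A \<subseteq> A"
  proof
    fix z assume "z \<in> Phi ` A"
    then obtain y x where yx: "y ^ q = y" "y \<noteq> 0" "x \<noteq> 0" and z: "z = Phi (y, x)"
      by (auto simp: A_def Ks_def Fs_def)
    define N where "N = x ^ (q + 1)"
    have Nq: "N ^ q = N"
    proof -
      have "N ^ q = x ^ (q * q) * x ^ q" unfolding N_def by (simp add: power_mult[symmetric] algebra_simps power_add)
      thus ?thesis using pow_qq[of x] by (simp add: N_def mult.commute)
    qed
    have xE: "x powi E = N powi e1" unfolding N_def E_def by (simp only: power_int_power of_nat_add of_nat_1)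
    have "(N powi e1) ^ q = N powi e1"
    proof -
      have "(N powi e1) ^ q = N powi (e1 * int q)" by (simp add: power_int_power')
      also have "\<dots> = (N ^ q) powi e1" by (simp add: power_int_power mult.commute)
      finally show ?thesis using Nq by simp
    qed
    hence "(y * x powi E) ^ q = y * x powi E" using yx by (simp add: xE power_mult_distrib)
    thus "z \<in> A" using yx by (simp add: z Phi_def A_def Ks_def Fs_def)
  qed
  have inj: "inj_on Phi A"
  proof (rule inj_onI)
    fix w1 w2 assume "w1 \<in> A" "w2 \<in> A" and eq: "Phi w1 = Phi w2"
    then obtain y x y' x' where zz: "w1 = (y, x)" "w2 = (y', x')"
      and yx: "y ^ q = y" "y \<noteq> 0" "x \<noteq> 0" "y' ^ q = y'" "y' \<noteq> 0" "x' \<noteq> 0"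
      by (auto simp: A_def Ks_def Fs_def)
    have eqE: "y * x powi E = y' * x' powi E" and eq2: "y * x powi e2 = y' * x' powi e2"
      using eq by (auto simp: zz Phi_def)
    define r where "r = y / y'"
    define s where "s = x / x'"
    have r0: "r \<noteq> 0" and s0: "s \<noteq> 0" using yx by (auto simp: r_def s_def)
    have rE: "r * s powi E = 1"
    proof -
      have "r * s powi E = (y * x powi E) / (y' * x' powi E)"
        by (simp add: r_def s_def power_int_divide_distrib)
      thus ?thesis using eqE yx by simp
    qed
    have r2: "r * s powi e2 = 1"
    proof -
      have "r * s powi e2 = (y * x powi e2) / (y' * x' powi e2)"
        by (simp add: r_def s_def power_int_divide_distrib)
      thus ?thesis using eq2 yx by simp
    qed
    have sE: "s powi E = s powi e2" using rE r2 r0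
      by (metis mult_cancel_left)
    have rq: "r ^ q = r" using yx by (simp add: r_def power_divide)
    define t where "t = s powi e2"
    have tr: "t = inverse r" using r2 r0 by (simp add: t_def field_simps)
    have tq: "t ^ q = t" using rq by (simp add: tr power_inverse)
    have t0: "t \<noteq> 0" using r0 tr by simp
    have t1: "t ^ (q - 1) = 1" by (rule pow_sub1[OF tq t0 q0])
    define z where "z = s ^ (q - 1)"
    have z0: "z \<noteq> 0" using s0 by (simp add: z_def)
    have ze2: "z powi e2 = 1"
    proof -
      have "z powi e2 = s powi (int (q - 1) * e2)" by (simp add: z_def power_int_power)
      also have "\<dots> = (s powi e2) ^ (q - 1)" by (simp add: power_int_power' mult.commute)
      finally show ?thesis using t1 by (simp add: t_def)
    qed
    have zq: "z powi (int q + 1) = 1"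
    proof -
      have h: "int q + 1 = int (q + 1)" by simp
      have "z powi (int q + 1) = z ^ (q + 1)" by (simp only: h power_int_of_nat)
      also have "\<dots> = s ^ (q * q - 1)" by (simp only: z_def power_mult[symmetric] qq1)
      also have "\<dots> = 1" using pow_sub1[OF pow_qq s0] q0 by simp
      finally show ?thesis .
    qed
    have "z = 1" by (rule unit_root[OF z0 _ zq ze2]) (use g2 in auto)
    hence sq: "s ^ q = s" using q0 by (metis Suc_diff_1 mult.right_neutral power_Suc z_def)
    have "s powi E = (s ^ (q + 1)) powi e1" by (simp only: E_def power_int_power of_nat_add of_nat_1)
    also have "s ^ (q + 1) = s ^ 2" using sq by (simp add: power2_eq_square)
    also have "(s ^ 2) powi e1 = s powi (2 * e1)" by (simp add: power_int_power)
    finally have "s powi (2 * e1) = s powi e2" using sE by simp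
    hence sd: "s powi (2 * e1 - e2) = 1" using s0 by (simp add: power_int_diff)
    have h1: "int q - 1 = int (q - 1)" using q0 by (subst of_nat_diff) auto
    have "s powi (int q - 1) = s ^ (q - 1)" by (simp only: h1 power_int_of_nat)
    hence sq1: "s powi (int q - 1) = 1" using \<open>z = 1\<close> by (simp add: z_def)
    have s1: "s = 1" by (rule unit_root[OF s0 g1 sq1 sd])
    hence "r = 1" using r2 by simp
    hence "y = y'" "x = x'" using s1 yx by (auto simp: r_def s_def)
    thus "w1 = w2" using zz by simp
  qed
  have fin: "finite A" by simp
  have bij: "bij_betw Phi A A" using endo_inj_surj[OF fin img inj] inj by (simp add: bij_betw_def)
  have "T_sum q e1 e2 a b = (\<Sum>(y,x)\<in>A. can_add_char (y * a * x powi E + y * b * x powi e2))"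
    unfolding T_sum_def A_def Ks_def Fs_def E_def by (simp add: sum.cartesian_product)
  also have "\<dots> = (\<Sum>z\<in>A. (\<lambda>(u,v). can_add_char (u * a + v * b)) (Phi z))"
    by (rule sum.cong) (auto simp: Phi_def mult_ac)
  also have "\<dots> = (\<Sum>z\<in>A. (\<lambda>(u,v). can_add_char (u * a + v * b)) z)"
    by (rule sum.reindex_bij_betw[OF bij])
  also have "\<dots> = (\<Sum>u\<in>Ks. \<Sum>v\<in>Fs. can_add_char (u * a) * can_add_char (v * b))"
    unfolding A_def by (simp add: sum.cartesian_product psi_add)
  also have "\<dots> = (\<Sum>u\<in>Ks. can_add_char (u * a)) * (\<Sum>v\<in>Fs. can_add_char (v * b))"
    by (simp add: sum_product)
  finally show ?thesis unfolding Ks_def Fs_def .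
qed

end

lemma char_eq:
  assumes "prime p0" "CARD('a::{field,finite}) = p0 ^ n" "n > 0"
  shows "CHAR('a) = p0"
proof -
  have "(of_nat p0 :: 'a) ^ n = 0" using of_nat_card_zero[where 'a='a] assms(2) by simp
  hence "(of_nat p0 :: 'a) = 0" by simp
  hence "CHAR('a) dvd p0" by (simp add: of_nat_eq_0_iff_char_dvd)
  thus ?thesis using assms(1) CHAR_not_1[where 'a='a] by (metis prime_nat_iff One_nat_def)
qed

theorem corollary1:
  fixes q :: nat and e1 e2 :: int and a b :: "'a::{field,finite}"
  assumes "\<exists>p k. prime p \<and> k > 0 \<and> q = p ^ k"
    and "CARD('a) = q ^ 2"
    and "gcd (int q - 1) (2 * e1 - e2) = 1"
    and "gcd (int q + 1) e2 = 1"
  shows "(a = 0 \<and> b = 0 \<longrightarrow>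
            T_sum q e1 e2 a b = (of_nat q - 1) * (of_nat q ^ 2 - 1))
       \<and> (a ^ q + a \<noteq> 0 \<and> b = 0 \<longrightarrow>
            T_sum q e1 e2 a b = - (of_nat q ^ 2 - 1))
       \<and> (a ^ q + a = 0 \<and> b \<noteq> 0 \<longrightarrow>
            T_sum q e1 e2 a b = - (of_nat q - 1))
       \<and> (a ^ q + a \<noteq> 0 \<and> b \<noteq> 0 \<longrightarrow>
            T_sum q e1 e2 a b = 1)"
proof -
  obtain p0 k where pk: "prime p0" "k > 0" "q = p0 ^ k" using assms(1) by blast
  have cardF: "CARD('a) = p0 ^ (2 * k)" using assms(2) pk(3) by (simp add: power_mult[symmetric] mult.commute)
  have charp: "CHAR('a) = p0" using char_eq[OF pk(1) cardF] pk(2) by simp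
  interpret F: ffset p0 k "TYPE('a)" by unfold_locales (use pk charp cardF in auto)
  have q1: "q \<ge> 1" using F.q2 pk(3) by simp
  have main: "T_sum q e1 e2 a b = (if a ^ q + a = 0 then of_nat (q - 1) else -1) *
                 (if b = 0 then of_nat (CARD('a) - 1) else -1)"
    using F.T_eval[of e1 e2 a b] F.SK[of a] F.SF[of b] assms(3,4) pk(3) by simp
  have c1: "of_nat (q - Suc 0) = (of_nat q - 1 :: complex)" using q1 by (simp add: of_nat_diff)
  have c2: "of_nat (q ^ 2 - Suc 0) = (of_nat q ^ 2 - 1 :: complex)"
    using q1 by (simp add: of_nat_diff)
  have a0: "a = 0 \<Longrightarrow> a ^ q + a = 0" using q1 by simp
  show ?thesis unfolding main assms(2) using a0 by (auto simp: c1 c2)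
qed

end
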